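(* Consider the integer quadratic program: minimize $x^TQx$ subject to $Ax\le b$, $Cx=d$, $x\in\mathbb{Z}^n$. Suppose this program has an optimal solution, all of its optimal solutions are deep, and for every $y_i\in Y$ the row vector $y_i^TQ$ is linearly dependent on the rows of $C$. Then for every optimal solution $x^\star$ and every integer vector $\lambda\in\mathbb{Z}^r$, the vector $x^\star+Y\lambda$ is also an optimal solution.
   Context: Setting: $Q$ is an $n\times n$ integer symmetric matrix, $A$ an $m\times n$ integer matrix, $b\in\mathbb{Z}^m$, $C$ an integer matrix with $n$ columns and linearly independent rows, and $d$ an integer vector. $\Delta$ is the maximum absolute value of the determinant of a square submatrix of $C$. $y_1,\dots,y_r$ is a basis of the nullspace of $C$ consisting of integer vectors with $|y_i|_\infty\le\Delta^2$; $Y$ denotes both the set of these vectors and the $n\times r$ matrix with columns $y_1,\dots,y_r$. A feasible solution is an $x\in\mathbb{Z}^n$ with $Ax\le b$ and $Cx=d$; an optimal solution is a feasible solution minimizing $x^TQx$. A feasible solution $x$ is deep if $x+y_i$ and $x-y_i$ are feasible for all $y_i\in Y$. *)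

theory Defs
  imports "Jordan_Normal_Form.Determinant" "Jordan_Normal_Form.DL_Submatrix"
begin

text \<open>Vectors and matrices are Jordan_Normal_Form vec/mat with explicit dimensions.
  Integer data is embedded into the reals (via map_mat/map_vec of_int) for linear-algebra notions.\<close>

definition rmat :: "int mat \<Rightarrow> real mat" where
  "rmat M = map_mat real_of_int M"

definition rvec :: "int vec \<Rightarrow> real vec" where
  "rvec v = map_vec real_of_int v"

definition rows_lin_indep :: "int mat \<Rightarrow> bool" where
  "rows_lin_indep C \<longleftrightarrow>
     (\<forall>u \<in> carrier_vec (dim_row C). transpose_mat (rmat C) *\<^sub>v u = 0\<^sub>v (dim_col C) \<longrightarrow> u = 0\<^sub>v (dim_row C))"

definition max_subdet :: "int mat \<Rightarrow> int" where
  "max_subdet C = Max {\<bar>det (submatrix C I J)\<bar> | I J.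
       I \<subseteq> {0..<dim_row C} \<and> J \<subseteq> {0..<dim_col C} \<and> card I = card J}"

definition nullspace_basis :: "int mat \<Rightarrow> int mat \<Rightarrow> bool" where
  "nullspace_basis C Y \<longleftrightarrow>
     dim_row Y = dim_col C \<and>
     C * Y = 0\<^sub>m (dim_row C) (dim_col Y) \<and>
     (\<forall>c \<in> carrier_vec (dim_col Y). rmat Y *\<^sub>v c = 0\<^sub>v (dim_row Y) \<longrightarrow> c = 0\<^sub>v (dim_col Y)) \<and>
     (\<forall>z \<in> carrier_vec (dim_col C). rmat C *\<^sub>v z = 0\<^sub>v (dim_row C) \<longrightarrow>
        (\<exists>c \<in> carrier_vec (dim_col Y). z = rmat Y *\<^sub>v c))"

definition feasible :: "int mat \<Rightarrow> int vec \<Rightarrow> int mat \<Rightarrow> int vec \<Rightarrow> int vec \<Rightarrow> bool" where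
  "feasible A b C d x \<longleftrightarrow> x \<in> carrier_vec (dim_col A) \<and>
     (\<forall>i < dim_row A. (A *\<^sub>v x) $ i \<le> b $ i) \<and> C *\<^sub>v x = d"

definition objective :: "int mat \<Rightarrow> int vec \<Rightarrow> int" where
  "objective Q x = x \<bullet> (Q *\<^sub>v x)"

definition optimal :: "int mat \<Rightarrow> int mat \<Rightarrow> int vec \<Rightarrow> int mat \<Rightarrow> int vec \<Rightarrow> int vec \<Rightarrow> bool" where
  "optimal Q A b C d x \<longleftrightarrow> feasible A b C d x \<and>
     (\<forall>z. feasible A b C d z \<longrightarrow> objective Q x \<le> objective Q z)"

definition deep :: "int mat \<Rightarrow> int vec \<Rightarrow> int mat \<Rightarrow> int vec \<Rightarrow> int mat \<Rightarrow> int vec \<Rightarrow> bool" where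
  "deep A b C d Y x \<longleftrightarrow> feasible A b C d x \<and>
     (\<forall>i < dim_col Y. feasible A b C d (x + col Y i) \<and> feasible A b C d (x - col Y i))"

end

theory Submission
  imports Defs
begin

lemma rvec_scalar: assumes "v \<in> carrier_vec n" "w \<in> carrier_vec n"
  shows "real_of_int (v \<bullet> w) = rvec v \<bullet> rvec w"
  using assms by (simp add: scalar_prod_def rvec_def of_int_sum)

lemma rvec_mult: assumes "M \<in> carrier_mat k n" "v \<in> carrier_vec n"
  shows "rvec (M *\<^sub>v v) = rmat M *\<^sub>v rvec v"
  using of_int_hom.mult_mat_vec_hom[OF assms] by (simp add: rvec_def rmat_def)

lemma yQy:
  fixes Q C :: "int mat" and y :: "int vec"
  assumes Q: "Q \<in> carrier_mat n n" and C: "C \<in> carrier_mat p n" and y: "y \<in> carrier_vec n"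
    and Cy: "C *\<^sub>v y = 0\<^sub>v p" and u: "u \<in> carrier_vec p"
    and dep: "transpose_mat (rmat Q) *\<^sub>v rvec y = transpose_mat (rmat C) *\<^sub>v u"
  shows "y \<bullet> (Q *\<^sub>v y) = 0"
proof -
  have rQ: "rmat Q \<in> carrier_mat n n" and rC: "rmat C \<in> carrier_mat p n" and ry: "rvec y \<in> carrier_vec n"
    using Q C y by (auto simp: rmat_def rvec_def)
  have "real_of_int (y \<bullet> (Q *\<^sub>v y)) = rvec y \<bullet> (rmat Q *\<^sub>v rvec y)"
    using rvec_scalar[OF y, of "Q *\<^sub>v y"] rvec_mult[OF Q y] mult_mat_vec_carrier[OF Q y] by simp
  also have "\<dots> = (transpose_mat (rmat Q) *\<^sub>v rvec y) \<bullet> rvec y"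
    using transpose_vec_mult_scalar[OF rQ ry ry] by simp
  also have "\<dots> = u \<bullet> (rmat C *\<^sub>v rvec y)"
    unfolding dep using transpose_vec_mult_scalar[OF rC ry u] by simp
  also have "rmat C *\<^sub>v rvec y = 0\<^sub>v p"
    using rvec_mult[OF C y] Cy by (metis of_int_hom.vec_hom_zero rvec_def)
  finally show ?thesis using u by simp
qed

lemma mult_uminus_vec: assumes Q: "(Q :: int mat) \<in> carrier_mat k n" and y: "y \<in> carrier_vec n"
  shows "Q *\<^sub>v (- y) = - (Q *\<^sub>v y)"
  using Q y by (intro eq_vecI, auto)

lemma neg_quad: assumes Q: "(Q :: int mat) \<in> carrier_mat n n" and y: "y \<in> carrier_vec n"
  shows "(- y) \<bullet> (Q *\<^sub>v (- y)) = y \<bullet> (Q *\<^sub>v y)"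
  using Q y by (simp add: mult_mat_vec_carrier mult_uminus_vec)

lemma obj_add:
  fixes Q :: "int mat"
  assumes Q: "Q \<in> carrier_mat n n" and Qsym: "transpose_mat Q = Q"
    and z: "z \<in> carrier_vec n" and y: "y \<in> carrier_vec n"
  shows "objective Q (z + y) = objective Q z + 2 * (y \<bullet> (Q *\<^sub>v z)) + y \<bullet> (Q *\<^sub>v y)"
proof -
  have Qz: "Q *\<^sub>v z \<in> carrier_vec n" and Qy: "Q *\<^sub>v y \<in> carrier_vec n" using Q z y by auto
  have "z \<bullet> (Q *\<^sub>v y) = y \<bullet> (Q *\<^sub>v z)"
    using transpose_vec_mult_scalar[OF Q y z] Qsym comm_scalar_prod[OF Qz y] by simp
  moreover have "objective Q (z + y) = z \<bullet> (Q *\<^sub>v z) + z \<bullet> (Q *\<^sub>v y) + (y \<bullet> (Q *\<^sub>v z) + y \<bullet> (Q *\<^sub>v y))"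
    unfolding objective_def using Q z y Qz Qy
    by (simp add: mult_add_distrib_mat_vec[OF Q z y] add_scalar_prod_distrib[OF z y]
        scalar_prod_add_distrib[of _ n])
  ultimately show ?thesis unfolding objective_def by simp
qed

lemma step:
  fixes Q :: "int mat"
  assumes Q: "Q \<in> carrier_mat n n" and Qsym: "transpose_mat Q = Q" and A: "A \<in> carrier_mat m n"
    and y: "y \<in> carrier_vec n" and yQy: "y \<bullet> (Q *\<^sub>v y) = 0"
    and opt: "optimal Q A b C d z" and f1: "feasible A b C d (z + y)" and f2: "feasible A b C d (z + (- y))"
  shows "optimal Q A b C d (z + y)"
proof -
  have z: "z \<in> carrier_vec n" using opt A by (auto simp: optimal_def feasible_def)
  have my: "- y \<in> carrier_vec n" using y by auto
  have e1: "objective Q (z + y) = objective Q z + 2 * (y \<bullet> (Q *\<^sub>v z))"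
    using obj_add[OF Q Qsym z y] yQy by simp
  have "(- y) \<bullet> (Q *\<^sub>v (- y)) = 0" using yQy Q y
    by (simp add: mult_mat_vec_carrier mult_uminus_vec)
  then have e2: "objective Q (z + (- y)) = objective Q z - 2 * (y \<bullet> (Q *\<^sub>v z))"
    using obj_add[OF Q Qsym z my] Q y z by (simp add: mult_mat_vec_carrier)
  have "objective Q z \<le> objective Q (z + y)" "objective Q z \<le> objective Q (z + (- y))"
    using opt f1 f2 unfolding optimal_def by auto
  then have "objective Q (z + y) = objective Q z" using e1 e2 by linarith
  then show ?thesis using opt f1 unfolding optimal_def by auto
qed

lemma nat_closure:
  fixes Op :: "int vec \<Rightarrow> bool"
  assumes Oc: "\<And>z. Op z \<Longrightarrow> z \<in> carrier_vec n" and v: "v \<in> carrier_vec n"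
    and Pv: "\<And>z. Op z \<Longrightarrow> Op (z + v)"
  shows "Op z \<Longrightarrow> Op (z + int k \<cdot>\<^sub>v v)"
proof (induction k arbitrary: z)
  case 0
  then have "z + int 0 \<cdot>\<^sub>v v = z" using Oc[OF 0] v by (intro eq_vecI, auto)
  then show ?case using 0 by simp
next
  case (Suc k)
  have z: "z \<in> carrier_vec n" using Oc[OF Suc.prems] .
  have "z + int (Suc k) \<cdot>\<^sub>v v = (z + v) + int k \<cdot>\<^sub>v v" using z v by (intro eq_vecI, auto simp: algebra_simps)
  then show ?case using Suc.IH[OF Pv[OF Suc.prems]] by simp
qed

lemma int_closure:
  fixes Op :: "int vec \<Rightarrow> bool"
  assumes Oc: "\<And>z. Op z \<Longrightarrow> z \<in> carrier_vec n" and v: "v \<in> carrier_vec n"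
    and Pv: "\<And>z. Op z \<Longrightarrow> Op (z + v)" and Pmv: "\<And>z. Op z \<Longrightarrow> Op (z + - v)"
    and Oz: "Op z"
  shows "Op (z + c \<cdot>\<^sub>v v)"
proof (cases "c \<ge> 0")
  case True
  define k where "k = nat c"
  have "c = int k" using True unfolding k_def by simp
  then show ?thesis using nat_closure[OF Oc v Pv Oz] by simp
next
  case False
  define k where "k = nat (- c)"
  have k: "c = - int k" using False unfolding k_def by simp
  have mv: "- v \<in> carrier_vec n" using v by simp
  have "c \<cdot>\<^sub>v v = int k \<cdot>\<^sub>v (- v)" using v k by (intro eq_vecI, auto)
  then show ?thesis using nat_closure[OF Oc mv Pmv Oz] by simp
qed

lemma unit_smult: assumes Y: "(Y :: int mat) \<in> carrier_mat n r" and k: "k < r"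
  shows "Y *\<^sub>v (c \<cdot>\<^sub>v unit_vec r k) = c \<cdot>\<^sub>v col Y k"
  using Y k by (intro eq_vecI, auto)

theorem corollary1:
  fixes Q A C Y :: "int mat" and b d :: "int vec" and n m p r :: nat
  assumes Q: "Q \<in> carrier_mat n n" and Qsym: "transpose_mat Q = Q"
    and A: "A \<in> carrier_mat m n" and b: "b \<in> carrier_vec m"
    and C: "C \<in> carrier_mat p n" and d: "d \<in> carrier_vec p"
    and Cind: "rows_lin_indep C"
    and Y: "Y \<in> carrier_mat n r" and Ybasis: "nullspace_basis C Y"
    and Ybound: "\<forall>i < n. \<forall>j < r. \<bar>Y $$ (i, j)\<bar> \<le> (max_subdet C)\<^sup>2"
    and ex_opt: "\<exists>x. optimal Q A b C d x"
    and all_deep: "\<forall>x. optimal Q A b C d x \<longrightarrow> deep A b C d Y x"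
    and dep: "\<forall>j < r. \<exists>u \<in> carrier_vec p.
                 transpose_mat (rmat Q) *\<^sub>v rvec (col Y j) = transpose_mat (rmat C) *\<^sub>v u"
  shows "\<forall>xs lam. optimal Q A b C d xs \<and> lam \<in> carrier_vec r \<longrightarrow>
           optimal Q A b C d (xs + Y *\<^sub>v lam)"
proof -
  let ?O = "optimal Q A b C d"
  have Oc: "\<And>z. ?O z \<Longrightarrow> z \<in> carrier_vec n" using A by (auto simp: optimal_def feasible_def)
  have CY: "C * Y = 0\<^sub>m p r" using Ybasis C Y unfolding nullspace_basis_def by auto
  have Pcol: "?O (z + col Y j) \<and> ?O (z + - col Y j)" if j: "j < r" and z: "?O z" for j z
  proof -
    let ?y = "col Y j"
    have y: "?y \<in> carrier_vec n" using Y j by auto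
    have Cy: "C *\<^sub>v ?y = 0\<^sub>v p"
    proof (rule eq_vecI)
      fix i assume i: "i < dim_vec (0\<^sub>v p :: int vec)"
      have "(C * Y) $$ (i, j) = 0" using CY i j by simp
      then show "(C *\<^sub>v ?y) $ i = 0\<^sub>v p $ i" using i j C Y by simp
    qed (use C in simp)
    obtain u where u: "u \<in> carrier_vec p"
      and du: "transpose_mat (rmat Q) *\<^sub>v rvec ?y = transpose_mat (rmat C) *\<^sub>v u"
      using dep j by blast
    have yQy: "?y \<bullet> (Q *\<^sub>v ?y) = 0" by (rule yQy[OF Q C y Cy u du])
    have my: "- ?y \<in> carrier_vec n" using y by simp
    have myQ: "(- ?y) \<bullet> (Q *\<^sub>v (- ?y)) = 0" using yQy neg_quad[OF Q y] by simp
    have dz: "deep A b C d Y z" using all_deep z by blast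
    have zc: "z \<in> carrier_vec n" using Oc[OF z] .
    have f1: "feasible A b C d (z + ?y)" and f2: "feasible A b C d (z + - ?y)"
      using dz j minus_add_uminus_vec[OF zc y] Y unfolding deep_def by auto
    have f2': "feasible A b C d (z + - (- ?y))" using f1 by simp
    show ?thesis using step[OF Q Qsym A y yQy z f1 f2] step[OF Q Qsym A my myQ z f2 f2'] by simp
  qed
  have Pgen: "?O (z + c \<cdot>\<^sub>v col Y j)" if j: "j < r" and z: "?O z" for j z c
    using int_closure[of ?O n "col Y j", OF Oc _ _ _ z] Pcol[OF j] Y j by auto
  show ?thesis
  proof (intro allI impI, elim conjE)
    fix xs and lam :: "int vec" assume xs: "?O xs" and lam: "lam \<in> carrier_vec r"
    define lk where "lk k = vec r (\<lambda>i. if i < k then lam $ i else (0::int))" for k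
    have lkc: "lk k \<in> carrier_vec r" for k unfolding lk_def by simp
    have "k \<le> r \<Longrightarrow> ?O (xs + Y *\<^sub>v lk k)" for k
    proof (induction k)
      case 0
      have "Y *\<^sub>v lk 0 = 0\<^sub>v n" using Y unfolding lk_def by (intro eq_vecI, auto simp: scalar_prod_def)
      then show ?case using xs Oc[OF xs] by simp
    next
      case (Suc k)
      have k: "k < r" using Suc.prems by simp
      have "lk (Suc k) = lk k + (lam $ k) \<cdot>\<^sub>v unit_vec r k" unfolding lk_def
        by (intro eq_vecI, auto simp: unit_vec_def less_Suc_eq)
      then have "Y *\<^sub>v lk (Suc k) = Y *\<^sub>v lk k + (lam $ k) \<cdot>\<^sub>v col Y k"
        using mult_add_distrib_mat_vec[OF Y lkc, of "(lam $ k) \<cdot>\<^sub>v unit_vec r k"]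
          unit_smult[OF Y k] by simp
      moreover have "xs + (Y *\<^sub>v lk k + (lam $ k) \<cdot>\<^sub>v col Y k) = (xs + Y *\<^sub>v lk k) + (lam $ k) \<cdot>\<^sub>v col Y k"
        using Oc[OF xs] Y k lkc[of k] by (simp add: assoc_add_vec)
      ultimately show ?case using Pgen[OF k Suc.IH] Suc.prems by simp
    qed
    moreover have "lk r = lam" using lam unfolding lk_def by (intro eq_vecI, auto)
    ultimately show "?O (xs + Y *\<^sub>v lam)" by fastforce
  qed
qed

end
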